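(* Let $\delta>0$ and let $\mathcal{G}$ be a class of graphs, each of average degree at least $2+\delta$, with unbounded girth. Let $\mathcal{A}$ be the class of all (unweighted) orientations of graphs in $\mathcal{G}$. Then $\mathcal{A}$ is not size-pliable.
   Context: An orientation of a graph is viewed as a structure over the signature $\{e\}$ with one binary symbol, where $e^{\mathbb{A}}(u,v)=1$ if $u\to v$ is an arc and $0$ otherwise. For structures $\mathbb{A},\mathbb{B}$ over a signature $\sigma$ (finite domain with functions $f^{\mathbb{A}}\colon A^{\mathrm{ar}(f)}\to\mathbb{Q}_{\ge0}$), $\mathrm{opt}(\mathbb{A},\mathbb{B})=\max_{h\colon A\to B}\sum_f\sum_{\bar x}f^{\mathbb{A}}(\bar x)f^{\mathbb{B}}(h(\bar x))$ over all maps, and $d_{\mathrm{opt}}(\mathbb{A},\mathbb{B})=\sup_{\mathbb{C}}|\ln\mathrm{opt}(\mathbb{A},\mathbb{C})-\ln\mathrm{opt}(\mathbb{B},\mathbb{C})|$ over all $\sigma$-structures $\mathbb{C}$ ($\ln0=-\infty$, $|\ln0-\ln0|=0$). A class $\mathcal{A}$ is size-pliable if for every $\varepsilon>0$ there is $k$ such that every $\mathbb{A}\in\mathcal{A}$ (signature $\sigma$) has a $\sigma$-structure $\mathbb{B}$ with domain of size at most $k$ and $d_{\mathrm{opt}}(\mathbb{A},\mathbb{B})\le\varepsilon$. *)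

theory Defs
  imports Complex_Main "HOL-Library.Extended_Real"
begin

text \<open>A structure over the signature with one binary function symbol e:
  a finite nonempty domain together with the interpretation of e
  (nonnegative rational values; only values on the domain matter).\<close>
type_synonym 'a struc = "'a set \<times> ('a \<Rightarrow> 'a \<Rightarrow> real)"

definition is_struc :: "'a struc \<Rightarrow> bool" where
  "is_struc S \<longleftrightarrow> finite (fst S) \<and> fst S \<noteq> {} \<and>
     (\<forall>x y. snd S x y \<in> \<rat> \<and> snd S x y \<ge> 0)"

definition opt :: "'a struc \<Rightarrow> 'b struc \<Rightarrow> real" where
  "opt S T = Max {(\<Sum>x\<in>fst S. \<Sum>y\<in>fst S. snd S x y * snd T (h x) (h y)) | h.
                   h ` fst S \<subseteq> fst T}"

text \<open>|ln a - ln b| with ln 0 = -infinity and |ln 0 - ln 0| = 0.\<close>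
definition ln_dist :: "real \<Rightarrow> real \<Rightarrow> ereal" where
  "ln_dist a b = (if a = 0 \<and> b = 0 then 0
                  else if a = 0 \<or> b = 0 then \<infinity>
                  else ereal \<bar>ln a - ln b\<bar>)"

text \<open>d_opt: supremum over all structures C (up to isomorphism every finite
  structure has a copy with domain a finite set of naturals).\<close>
definition d_opt :: "'a struc \<Rightarrow> 'b struc \<Rightarrow> ereal" where
  "d_opt S T = (SUP C \<in> {C :: nat struc. is_struc C}. ln_dist (opt S C) (opt T C))"

definition size_pliable :: "'a struc set \<Rightarrow> bool" where
  "size_pliable \<A> \<longleftrightarrow> (\<forall>\<epsilon>::real. \<epsilon> > 0 \<longrightarrow> (\<exists>k::nat. \<forall>A\<in>\<A>.
      \<exists>B :: nat struc. is_struc B \<and> card (fst B) \<le> k \<and> d_opt A B \<le> ereal \<epsilon>))"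

type_synonym 'v graph = "'v set \<times> 'v set set"

definition simple_graph :: "'v graph \<Rightarrow> bool" where
  "simple_graph G \<longleftrightarrow> finite (fst G) \<and>
     (\<forall>e\<in>snd G. \<exists>u v. u \<noteq> v \<and> u \<in> fst G \<and> v \<in> fst G \<and> e = {u, v})"

definition avg_degree :: "'v graph \<Rightarrow> real" where
  "avg_degree G = 2 * real (card (snd G)) / real (card (fst G))"

definition is_cycle :: "'v graph \<Rightarrow> 'v list \<Rightarrow> bool" where
  "is_cycle G cs \<longleftrightarrow> length cs \<ge> 3 \<and> distinct cs \<and> set cs \<subseteq> fst G \<and>
     (\<forall>i < length cs. {cs ! i, cs ! ((i + 1) mod length cs)} \<in> snd G)"

definition girth_ge :: "'v graph \<Rightarrow> nat \<Rightarrow> bool" where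
  "girth_ge G g \<longleftrightarrow> (\<forall>cs. is_cycle G cs \<longrightarrow> length cs \<ge> g)"

text \<open>An (unweighted) orientation of G, viewed as a structure: domain V,
  e(u,v) = 1 iff u -> v is an arc, each edge oriented in exactly one way.\<close>
definition is_orientation :: "'v graph \<Rightarrow> ('v \<Rightarrow> 'v \<Rightarrow> real) \<Rightarrow> bool" where
  "is_orientation G e \<longleftrightarrow>
     (\<forall>u v. e u v \<in> {0, 1}) \<and>
     (\<forall>u v. e u v = 1 \<longrightarrow> {u, v} \<in> snd G) \<and>
     (\<forall>u v. {u, v} \<in> snd G \<longrightarrow> (e u v = 1 \<longleftrightarrow> e v u = 0))"

definition orientations :: "'v graph set \<Rightarrow> 'v struc set" where
  "orientations \<G> = {(fst G, e) | G e. G \<in> \<G> \<and> is_orientation G e}"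

end

theory Submission
  imports Defs "HOL-Library.FuncSet"
begin


definition valu :: "'a struc \<Rightarrow> 'b struc \<Rightarrow> ('a \<Rightarrow> 'b) \<Rightarrow> real" where
  "valu S T h = (\<Sum>x\<in>fst S. \<Sum>y\<in>fst S. snd S x y * snd T (h x) (h y))"

lemma opt_set_eq:
  "{(\<Sum>x\<in>fst S. \<Sum>y\<in>fst S. snd S x y * snd T (h x) (h y)) | h. h ` fst S \<subseteq> fst T}
   = valu S T ` (fst S \<rightarrow>\<^sub>E fst T)"
proof (intro equalityI subsetI)
  fix z assume "z \<in> {(\<Sum>x\<in>fst S. \<Sum>y\<in>fst S. snd S x y * snd T (h x) (h y)) | h. h ` fst S \<subseteq> fst T}"
  then obtain h where h: "h ` fst S \<subseteq> fst T" and z: "z = (\<Sum>x\<in>fst S. \<Sum>y\<in>fst S. snd S x y * snd T (h x) (h y))" by blast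
  have "restrict h (fst S) \<in> fst S \<rightarrow>\<^sub>E fst T" using h by auto
  moreover have "valu S T (restrict h (fst S)) = z" unfolding valu_def z
    by (intro sum.cong refl) auto
  ultimately show "z \<in> valu S T ` (fst S \<rightarrow>\<^sub>E fst T)" by (metis image_eqI)
next
  fix z assume "z \<in> valu S T ` (fst S \<rightarrow>\<^sub>E fst T)"
  then obtain h where "h \<in> fst S \<rightarrow>\<^sub>E fst T" "z = valu S T h" by blast
  then show "z \<in> {(\<Sum>x\<in>fst S. \<Sum>y\<in>fst S. snd S x y * snd T (h x) (h y)) | h. h ` fst S \<subseteq> fst T}"
    unfolding valu_def by (auto simp: PiE_def)
qed

lemma opt_eq: "opt S T = Max (valu S T ` (fst S \<rightarrow>\<^sub>E fst T))"
  unfolding opt_def opt_set_eq ..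

lemma opt_ge:
  assumes "finite (fst S)" "finite (fst T)" "h ` fst S \<subseteq> fst T"
  shows "valu S T h \<le> opt S T"
proof -
  have "restrict h (fst S) \<in> fst S \<rightarrow>\<^sub>E fst T" using assms by auto
  moreover have "valu S T (restrict h (fst S)) = valu S T h" unfolding valu_def
    by (intro sum.cong refl) auto
  ultimately show ?thesis unfolding opt_eq using assms
    by (metis Max_ge finite_PiE finite_imageI image_eqI)
qed

lemma opt_obtain:
  assumes "finite (fst S)" "finite (fst T)" "fst T \<noteq> {}"
  obtains h where "h ` fst S \<subseteq> fst T" "opt S T = valu S T h"
proof -
  have ne: "fst S \<rightarrow>\<^sub>E fst T \<noteq> {}" using assms by (simp add: PiE_eq_empty_iff)
  have "opt S T \<in> valu S T ` (fst S \<rightarrow>\<^sub>E fst T)" unfolding opt_eq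
    using assms ne by (intro Max_in finite_imageI finite_PiE) auto
  then obtain h where "h \<in> fst S \<rightarrow>\<^sub>E fst T" "opt S T = valu S T h" by blast
  then show ?thesis using that by (auto simp: PiE_def)
qed

lemma d_opt_le:
  assumes "d_opt A B \<le> ereal e" "is_struc (C :: nat struc)"
  shows "ln_dist (opt A C) (opt B C) \<le> ereal e"
  using assms unfolding d_opt_def by (meson SUP_le_iff mem_Collect_eq)




lemma simple_edge_neq:
  assumes "simple_graph G" "{x,y} \<in> snd G" shows "x \<noteq> y"
  using assms unfolding simple_graph_def
  by (metis doubleton_eq_iff insert_absorb2)

lemma leaf_exists:
  assumes sg: "simple_graph G" and fin: "finite S" and ne: "S \<noteq> {}"
    and noc: "\<forall>cs. is_cycle G cs \<longrightarrow> \<not> set cs \<subseteq> S"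
  shows "\<exists>v\<in>S. \<exists>u. \<forall>w\<in>S. {v,w} \<in> snd G \<longrightarrow> w = u"
proof (rule ccontr)
  assume "\<not> ?thesis"
  then have H: "\<And>v u. v \<in> S \<Longrightarrow> \<exists>w\<in>S. {v,w} \<in> snd G \<and> w \<noteq> u" by blast
  define nx where "nx p c = (SOME w. w \<in> S \<and> {c,w} \<in> snd G \<and> w \<noteq> p)" for p c
  have nx: "nx p c \<in> S \<and> {c, nx p c} \<in> snd G \<and> nx p c \<noteq> p" if "c \<in> S" for p c
    unfolding nx_def by (rule someI_ex) (use H[OF that, of p] in blast)
  obtain a where a: "a \<in> S" using ne by blast
  define f where "f = rec_nat (a, nx a a) (\<lambda>_ pc. (snd pc, nx (fst pc) (snd pc)))"
  have f0: "f 0 = (a, nx a a)" unfolding f_def by simp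
  have fS: "f (Suc n) = (snd (f n), nx (fst (f n)) (snd (f n)))" for n unfolding f_def by simp
  have inv: "fst (f n) \<in> S \<and> snd (f n) \<in> S \<and> {fst (f n), snd (f n)} \<in> snd G" for n
  proof (induction n)
    case 0 then show ?case using a nx[OF a, of a] by (simp add: f0)
  next
    case (Suc n) then show ?case using nx[of "snd (f n)" "fst (f n)"] by (simp add: fS)
  qed
  define w where "w n = fst (f n)" for n
  have wS: "w n \<in> S" for n using inv unfolding w_def by blast
  have wE: "{w n, w (Suc n)} \<in> snd G" for n using inv[of n] unfolding w_def by (simp add: fS)
  have w2: "w (Suc (Suc n)) \<noteq> w n" for n
    using nx[of "snd (f n)" "fst (f n)"] inv[of n] unfolding w_def by (simp add: fS)
  have "\<not> inj_on w {0..card S}"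
  proof
    assume "inj_on w {0..card S}"
    then have "card (w ` {0..card S}) = card {0..card S}" by (rule card_image)
    also have "\<dots> = card S + 1" by simp
    finally have c1: "card (w ` {0..card S}) = card S + 1" .
    have "w ` {0..card S} \<subseteq> S" using wS by blast
    from card_mono[OF fin this] c1 show False by linarith
  qed
  then have ex: "\<exists>j. \<exists>i<j. w i = w j" unfolding inj_on_def
    by (metis linorder_neqE_nat)
  define J where "J = (LEAST j. \<exists>i<j. w i = w j)"
  have "\<exists>i<J. w i = w J" unfolding J_def using ex by (rule LeastI_ex)
  then obtain i where iJ: "i < J" "w i = w J" by blast
  have minJ: "w a \<noteq> w b" if "a < b" "b < J" for a b
  proof
    assume "w a = w b"
    then have "\<exists>i<b. w i = w b" using that by blast
    then have "J \<le> b" unfolding J_def by (rule Least_le)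
    then show False using that by simp
  qed
  define cs where "cs = map w [i..<J]"
  have len: "length cs = J - i" unfolding cs_def by simp
  have "distinct cs" unfolding cs_def distinct_map
  proof
    show "inj_on w (set [i..<J])"
      unfolding inj_on_def by (metis atLeastLessThan_iff linorder_neqE_nat minJ set_upt)
  qed simp
  moreover have "J - i \<ge> 3"
  proof (rule ccontr)
    assume "\<not> J - i \<ge> 3"
    then have "J = Suc i \<or> J = Suc (Suc i)" using iJ by linarith
    then show False
    proof
      assume "J = Suc i"
      then show False using wE[of i] iJ simple_edge_neq[OF sg] by metis
    next
      assume "J = Suc (Suc i)"
      then show False using w2[of i] iJ by simp
    qed
  qed
  moreover have "set cs \<subseteq> S" unfolding cs_def using wS by auto
  moreover have "set cs \<subseteq> fst G"
  proof -
    have "w n \<in> fst G" for n using wE[of n] sg unfolding simple_graph_def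
      by (metis doubleton_eq_iff insert_iff)
    then show ?thesis unfolding cs_def by auto
  qed
  moreover have "\<forall>t < length cs. {cs ! t, cs ! ((t + 1) mod length cs)} \<in> snd G"
  proof (intro allI impI)
    fix t assume t: "t < length cs"
    have ct: "cs ! t = w (i + t)" unfolding cs_def using t len by simp
    show "{cs ! t, cs ! ((t + 1) mod length cs)} \<in> snd G"
    proof (cases "t + 1 < length cs")
      case True
      then have "cs ! ((t + 1) mod length cs) = w (Suc (i + t))" unfolding cs_def using len by simp
      then show ?thesis using ct wE by simp
    next
      case False
      then have "t + 1 = length cs" using t by simp
      then have J: "Suc (i + t) = J" using len iJ by simp
      have "cs ! ((t + 1) mod length cs) = w i" unfolding cs_def using \<open>t + 1 = length cs\<close> len iJ by simp
      then have "cs ! ((t + 1) mod length cs) = w (Suc (i + t))" using J iJ by simp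
      then show ?thesis using ct wE by simp
    qed
  qed
  ultimately have "is_cycle G cs" unfolding is_cycle_def using len by simp
  then show False using noc \<open>set cs \<subseteq> S\<close> by blast
qed


lemma potential_exists:
  assumes sg: "simple_graph G" and ori: "is_orientation G e" and fin: "finite S"
    and noc: "\<forall>cs. is_cycle G cs \<longrightarrow> \<not> set cs \<subseteq> S"
  shows "\<exists>q::'v \<Rightarrow> int. (\<forall>x\<in>S. \<bar>q x\<bar> \<le> int (card S)) \<and>
           (\<forall>x\<in>S. \<forall>y\<in>S. e x y = 1 \<longrightarrow> q y = q x + 1)"
  using fin noc
proof (induction S rule: finite_psubset_induct)
  case (psubset S)
  show ?case
  proof (cases "S = {}")
    case True then show ?thesis by (intro exI[of _ "\<lambda>_. 0"]) simp
  next
    case False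
    obtain v u where v: "v \<in> S" and leaf: "\<And>w. w \<in> S \<Longrightarrow> {v,w} \<in> snd G \<Longrightarrow> w = u"
      using leaf_exists[OF sg psubset.hyps(1) False psubset.prems] by blast
    define S' where "S' = S - {v}"
    have ps: "S' \<subset> S" using v unfolding S'_def by blast
    have "\<forall>cs. is_cycle G cs \<longrightarrow> \<not> set cs \<subseteq> S'" using psubset.prems unfolding S'_def by blast
    then obtain q' where q'b: "\<forall>x\<in>S'. \<bar>q' x\<bar> \<le> int (card S')"
      and q'e: "\<forall>x\<in>S'. \<forall>y\<in>S'. e x y = 1 \<longrightarrow> q' y = q' x + 1"
      using psubset.IH[OF ps] by blast
    have cS: "card S = card S' + 1"
    proof -
      have "card S > 0" using v psubset.hyps(1) card_gt_0_iff by blast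
      then show ?thesis using v psubset.hyps(1) by (simp add: S'_def card_Diff_singleton)
    qed
    have arc: "{x,y} \<in> snd G" if "e x y = 1" for x y
      using ori that unfolding is_orientation_def by blast
    have anti: "e y x \<noteq> 1" if "e x y = 1" for x y
    proof -
      have "{x,y} \<in> snd G" using arc that .
      moreover have "\<forall>u v. {u, v} \<in> snd G \<longrightarrow> (e u v = 1) = (e v u = 0)"
        using ori unfolding is_orientation_def by blast
      ultimately show ?thesis using that by force
    qed
    define val where "val = (if u \<in> S' \<and> e u v = 1 then q' u + 1
                              else if u \<in> S' \<and> e v u = 1 then q' u - 1 else 0)"
    define q where "q = q'(v := val)"
    show ?thesis
    proof (intro exI[of _ q] conjI ballI impI)
      fix x assume x: "x \<in> S"
      show "\<bar>q x\<bar> \<le> int (card S)"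
      proof (cases "x = v")
        case True
        have "\<bar>val\<bar> \<le> int (card S') + 1" unfolding val_def using q'b by auto
        then show ?thesis using True cS unfolding q_def by simp
      next
        case False
        then have "x \<in> S'" using x unfolding S'_def by blast
        then show ?thesis using q'b cS False unfolding q_def by force
      qed
    next
      fix x y assume x: "x \<in> S" and y: "y \<in> S" and exy: "e x y = 1"
      have xy: "x \<noteq> y" using simple_edge_neq[OF sg arc[OF exy]] .
      show "q y = q x + 1"
      proof (cases "x = v")
        case True
        then have yS: "y \<in> S'" using xy y unfolding S'_def by blast
        have "y = u" using leaf[OF y] arc[OF exy] True by blast
        then have "val = q' u - 1" unfolding val_def using yS exy True anti[OF exy] by auto
        then show ?thesis using True xy \<open>y = u\<close> unfolding q_def by simp
      next
        case False
        note xS = this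
        show ?thesis
        proof (cases "y = v")
          case True
          then have xS': "x \<in> S'" using xy x unfolding S'_def by blast
          have "{v,x} \<in> snd G" using arc[OF exy] True by (simp add: insert_commute)
          then have "x = u" using leaf[OF x] by blast
          then have "val = q' u + 1" unfolding val_def using xS' exy True by auto
          then show ?thesis using True xy \<open>x = u\<close> unfolding q_def by simp
        next
          case False
          then have "x \<in> S'" "y \<in> S'" using xS x y unfolding S'_def by auto
          then show ?thesis using q'e exy xS False unfolding q_def by simp
        qed
      qed
    qed
  qed
qed




definition sat :: "('v \<Rightarrow> int) \<Rightarrow> ('v set \<Rightarrow> 'v) \<Rightarrow> 'v set \<Rightarrow> bool" where
  "sat h d ed \<longleftrightarrow> (\<forall>x\<in>ed. x \<noteq> d ed \<longrightarrow> h (d ed) = h x + 1)"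

definition Bal :: "'v set set \<Rightarrow> ('v set \<Rightarrow> 'v) set" where
  "Bal M = {d \<in> PiE M (\<lambda>ed. ed). \<exists>h. \<forall>ed\<in>M. sat h d ed}"

definition adj :: "'v set set \<Rightarrow> ('v \<times> 'v) set" where
  "adj M = {(x,y). {x,y} \<in> M}"

definition Rel :: "'v set \<Rightarrow> 'v set set \<Rightarrow> ('v \<times> 'v) set" where
  "Rel V M = {(x,y). x \<in> V \<and> y \<in> V \<and> (x,y) \<in> (adj M)\<^sup>*}"

lemma equiv_Rel: "equiv V (Rel V M)"
proof -
  have "sym (adj M)" unfolding adj_def sym_def by (auto simp: insert_commute)
  then have s: "sym ((adj M)\<^sup>*)" by (rule sym_rtrancl)
  show ?thesis unfolding equiv_def refl_on_def sym_def trans_def Rel_def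
    using s unfolding sym_def by (auto intro: rtrancl_trans)
qed

lemma Rel_mono: "M \<subseteq> M' \<Longrightarrow> Rel V M \<subseteq> Rel V M'"
  unfolding Rel_def adj_def by (auto elim!: rtrancl_mono[THEN subsetD, rotated])

lemma quotient_img: "V // R = (\<lambda>x. R `` {x}) ` V"
  unfolding quotient_def by auto

lemma card_quotient_le: "finite V \<Longrightarrow> card (V // R) \<le> card V"
  unfolding quotient_img by (rule card_image_le)

lemma coarsen:
  assumes fin: "finite V" and eq: "equiv V R" and eq': "equiv V R'" and sub: "R \<subseteq> R'"
  shows "card (V // R') \<le> card (V // R)"
    and "a \<in> V \<Longrightarrow> b \<in> V \<Longrightarrow> (a,b) \<in> R' \<Longrightarrow> (a,b) \<notin> R \<Longrightarrow> card (V // R') < card (V // R)"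
proof -
  define \<phi> where "\<phi> X = R' `` X" for X
  have key: "\<phi> (R `` {x}) = R' `` {x}" if "x \<in> V" for x
  proof
    show "\<phi> (R `` {x}) \<subseteq> R' `` {x}" unfolding \<phi>_def using sub eq'
      unfolding equiv_def trans_def by blast
    show "R' `` {x} \<subseteq> \<phi> (R `` {x})" unfolding \<phi>_def using eq that
      unfolding equiv_def refl_on_def by blast
  qed
  have img: "\<phi> ` (V // R) = V // R'" unfolding quotient_img image_image
    using key by (auto simp: image_iff)
  have finQ: "finite (V // R)" unfolding quotient_img using fin by simp
  show "card (V // R') \<le> card (V // R)" unfolding img[symmetric] by (rule card_image_le[OF finQ])
  assume a: "a \<in> V" and b: "b \<in> V" and ab: "(a,b) \<in> R'" and nab: "(a,b) \<notin> R"
  have d1: "R `` {a} \<noteq> R `` {b}"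
  proof
    assume "R `` {a} = R `` {b}"
    moreover have "b \<in> R `` {b}" using eq b unfolding equiv_def refl_on_def by blast
    ultimately show False using nab by blast
  qed
  have d2: "\<phi> (R `` {a}) = \<phi> (R `` {b})" using key[OF a] key[OF b] eq' ab
    by (simp add: equiv_class_eq)
  have "\<not> inj_on \<phi> (V // R)" unfolding inj_on_def using d1 d2 a b
    unfolding quotient_img by blast
  then have "card (\<phi> ` (V // R)) \<noteq> card (V // R)" using inj_on_iff_eq_card[OF finQ] by blast
  then show "card (V // R') < card (V // R)" using card_image_le[OF finQ, of \<phi>] img by simp
qed


lemma Bal_pie: "d \<in> Bal M \<Longrightarrow> d \<in> PiE M (\<lambda>ed. ed)"
  unfolding Bal_def by simp

lemma Bal_mem: "d \<in> Bal M \<Longrightarrow> ed \<in> M \<Longrightarrow> d ed \<in> ed"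
  using Bal_pie PiE_mem by fast

lemma Bal_pot: "d \<in> Bal M \<Longrightarrow> \<exists>h. \<forall>ed\<in>M. sat h d ed"
  unfolding Bal_def by simp

lemma Bal_restrict:
  assumes "d \<in> Bal (insert e M)" shows "restrict d M \<in> Bal M"
proof -
  from assms obtain h where d: "d \<in> PiE (insert e M) (\<lambda>ed. ed)" and h: "\<forall>ed\<in>insert e M. sat h d ed"
    unfolding Bal_def by blast
  have "restrict d M \<in> PiE M (\<lambda>ed. ed)" using d by (auto simp: PiE_def)
  moreover have "\<forall>ed\<in>M. sat h (restrict d M) ed" using h unfolding sat_def by auto
  ultimately show ?thesis unfolding Bal_def by blast
qed

lemma finite_Bal: "finite M \<Longrightarrow> \<forall>ed\<in>M. finite ed \<Longrightarrow> finite (Bal M)"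
proof -
  assume "finite M" "\<forall>ed\<in>M. finite ed"
  then have "finite (PiE M (\<lambda>ed. ed))" by (intro finite_PiE) auto
  then show ?thesis unfolding Bal_def by (rule finite_subset[rotated]) auto
qed

lemma Bal_step_gen:
  assumes fM: "finite M" and fe: "finite e" and fin: "\<forall>ed\<in>M. finite ed"
  shows "card (Bal (insert e M)) \<le> card (Bal M) * card e"
proof -
  define \<rho> where "\<rho> d = (restrict d M, d e)" for d :: "'a set \<Rightarrow> 'a"
  have inj: "inj_on \<rho> (Bal (insert e M))"
  proof (rule inj_onI)
    fix d1 d2 assume d1: "d1 \<in> Bal (insert e M)" and d2: "d2 \<in> Bal (insert e M)" and eq: "\<rho> d1 = \<rho> d2"
    show "d1 = d2"
    proof (rule PiE_ext)
      show "d1 \<in> PiE (insert e M) (\<lambda>ed. ed)" "d2 \<in> PiE (insert e M) (\<lambda>ed. ed)"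
        using d1 d2 by (simp_all add: Bal_pie)
      fix i assume "i \<in> insert e M"
      then show "d1 i = d2 i" using eq unfolding \<rho>_def
        by (metis fst_conv snd_conv restrict_apply' insert_iff)
    qed
  qed
  have sub: "\<rho> ` Bal (insert e M) \<subseteq> Bal M \<times> e"
  proof
    fix z assume "z \<in> \<rho> ` Bal (insert e M)"
    then obtain d where d: "d \<in> Bal (insert e M)" and z: "z = \<rho> d" by blast
    have "d e \<in> e" using Bal_mem[OF d] by blast
    then show "z \<in> Bal M \<times> e" using Bal_restrict[OF d] z unfolding \<rho>_def by auto
  qed
  have "card (Bal (insert e M)) \<le> card (Bal M \<times> e)"
    by (rule card_inj_on_le[OF inj sub]) (use finite_Bal[OF fM fin] fe in simp)
  then show ?thesis by (simp add: card_cartesian_product)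
qed

lemma Bal_diff_const:
  assumes d1: "d1 \<in> Bal (insert e M)" and d2: "d2 \<in> Bal (insert e M)"
    and agree: "\<forall>ed\<in>M. d1 ed = d2 ed"
    and h1: "\<forall>ed\<in>insert e M. sat h1 d1 ed" and h2: "\<forall>ed\<in>insert e M. sat h2 d2 ed"
    and uv: "(u,v) \<in> (adj M)\<^sup>*"
  shows "h1 u - h2 u = h1 v - h2 v"
  using uv
proof (induction rule: rtrancl_induct)
  case base then show ?case by simp
next
  case (step y z)
  have ed: "{y,z} \<in> M" using step.hyps(2) unfolding adj_def by simp
  have dd: "d1 {y,z} \<in> {y,z}" using Bal_mem[OF d1] ed by blast
  have s1: "sat h1 d1 {y,z}" using h1 ed by blast
  have "sat h2 d2 {y,z}" using h2 ed by blast
  moreover have "d1 {y,z} = d2 {y,z}" using agree ed by blast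
  ultimately have s2: "sat h2 d1 {y,z}" unfolding sat_def by simp
  have "h1 y - h2 y = h1 z - h2 z"
  proof (cases "y = z")
    case False
    show ?thesis
    proof (cases "d1 {y,z} = z")
      case True
      have "h1 z = h1 y + 1" using s1 True False unfolding sat_def by simp
      moreover have "h2 z = h2 y + 1" using s2 True False unfolding sat_def by simp
      ultimately show ?thesis by simp
    next
      case f2: False
      then have T: "d1 {y,z} = y" using dd by simp
      have "h1 y = h1 z + 1" using s1 T False unfolding sat_def by simp
      moreover have "h2 y = h2 z + 1" using s2 T False unfolding sat_def by simp
      ultimately show ?thesis by simp
    qed
  next
    case True
    then show ?thesis by (rule arg_cong)
  qed
  then show ?case using step.IH by simp
qed

lemma Bal_connected:
  assumes d1: "d1 \<in> Bal (insert e M)" and d2: "d2 \<in> Bal (insert e M)"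
    and agree: "\<forall>ed\<in>M. d1 ed = d2 ed"
    and e: "e = {u,v}" and uv: "(u,v) \<in> (adj M)\<^sup>*"
  shows "d1 e = d2 e"
proof -
  obtain h1 where h1: "\<forall>ed\<in>insert e M. sat h1 d1 ed" using Bal_pot[OF d1] by blast
  obtain h2 where h2: "\<forall>ed\<in>insert e M. sat h2 d2 ed" using Bal_pot[OF d2] by blast
  have D: "h1 u - h2 u = h1 v - h2 v" by (rule Bal_diff_const[OF d1 d2 agree h1 h2 uv])
  have i1: "d1 e \<in> {u,v}" and i2: "d2 e \<in> {u,v}" using Bal_mem[OF d1] Bal_mem[OF d2] e by auto
  have s1: "sat h1 d1 e" and s2: "sat h2 d2 e" using h1 h2 by auto
  show ?thesis
  proof (rule ccontr)
    assume ne: "d1 e \<noteq> d2 e"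
    then have uv': "u \<noteq> v" using i1 i2 by auto
    from ne i1 i2 have "(d1 e = v \<and> d2 e = u) \<or> (d1 e = u \<and> d2 e = v)" by auto
    then show False
    proof
      assume c: "d1 e = v \<and> d2 e = u"
      have "h1 v = h1 u + 1" using s1 c uv' e unfolding sat_def by auto
      moreover have "h2 u = h2 v + 1" using s2 c uv' e unfolding sat_def by auto
      ultimately show False using D by simp
    next
      assume c: "d1 e = u \<and> d2 e = v"
      have "h1 u = h1 v + 1" using s1 c uv' e unfolding sat_def by auto
      moreover have "h2 v = h2 u + 1" using s2 c uv' e unfolding sat_def by auto
      ultimately show False using D by simp
    qed
  qed
qed

lemma Bal_step_conn:
  assumes fM: "finite M" and fin: "\<forall>ed\<in>M. finite ed"
    and e: "e = {u,v}" and uv: "(u,v) \<in> (adj M)\<^sup>*"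
  shows "card (Bal (insert e M)) \<le> card (Bal M)"
proof -
  have inj: "inj_on (\<lambda>d. restrict d M) (Bal (insert e M))"
  proof (rule inj_onI)
    fix d1 d2 assume d1: "d1 \<in> Bal (insert e M)" and d2: "d2 \<in> Bal (insert e M)"
      and eq: "restrict d1 M = restrict d2 M"
    have agree: "\<forall>ed\<in>M. d1 ed = d2 ed" using eq by (metis restrict_apply')
    have de: "d1 e = d2 e" by (rule Bal_connected[OF d1 d2 agree e uv])
    show "d1 = d2"
    proof (rule PiE_ext)
      show "d1 \<in> PiE (insert e M) (\<lambda>ed. ed)" "d2 \<in> PiE (insert e M) (\<lambda>ed. ed)"
        using d1 d2 by (simp_all add: Bal_pie)
      fix i assume "i \<in> insert e M"
      then show "d1 i = d2 i" using agree de by auto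
    qed
  qed
  have sub: "(\<lambda>d. restrict d M) ` Bal (insert e M) \<subseteq> Bal M" using Bal_restrict by blast
  show ?thesis by (rule card_inj_on_le[OF inj sub finite_Bal[OF fM fin]])
qed


lemma bal_bound:
  assumes finV: "finite V" and Eok: "\<forall>ed\<in>E. \<exists>u v. u \<noteq> v \<and> u \<in> V \<and> v \<in> V \<and> ed = {u,v}"
  shows "finite M \<Longrightarrow> M \<subseteq> E \<Longrightarrow> card (Bal M) \<le> 2 ^ (card V - card (V // Rel V M))"
proof (induction M rule: finite_induct)
  case empty
  have "Bal {} \<subseteq> PiE {} (\<lambda>ed. ed)" using Bal_pie by blast
  from card_mono[OF _ this] have "card (Bal {}) \<le> card (PiE {} (\<lambda>ed. ed))" by simp
  then have "card (Bal {}) \<le> 1" by simp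
  also have "(1::nat) \<le> 2 ^ (card V - card (V // Rel V {}))" by simp
  finally show ?case .
next
  case (insert e M)
  have eE: "e \<in> E" and ME: "M \<subseteq> E" using insert.prems by auto
  obtain u v where uv: "u \<noteq> v" "u \<in> V" "v \<in> V" "e = {u,v}" using Eok eE by meson
  have IH: "card (Bal M) \<le> 2 ^ (card V - card (V // Rel V M))" using insert.IH[OF ME] .
  have fin: "\<forall>ed\<in>M. finite ed"
  proof
    fix ed assume "ed \<in> M"
    then obtain a b where "ed = {a,b}" using Eok ME by blast
    then show "finite ed" by simp
  qed
  define c where "c = card (V // Rel V M)"
  define c' where "c' = card (V // Rel V (insert e M))"
  have cc: "c' \<le> c" unfolding c_def c'_def
    by (rule coarsen(1)[OF finV equiv_Rel equiv_Rel Rel_mono]) blast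
  have cn: "c \<le> card V" unfolding c_def by (rule card_quotient_le[OF finV])
  show ?case
  proof (cases "(u,v) \<in> (adj M)\<^sup>*")
    case True
    have "card (Bal (insert e M)) \<le> card (Bal M)"
      by (rule Bal_step_conn[OF insert.hyps(1) fin uv(4) True])
    also have "\<dots> \<le> 2 ^ (card V - c)" using IH unfolding c_def .
    also have "\<dots> \<le> 2 ^ (card V - c')" using cc by (intro power_increasing) auto
    finally show ?thesis unfolding c'_def .
  next
    case False
    then have n1: "(u,v) \<notin> Rel V M" unfolding Rel_def by blast
    have "(u,v) \<in> adj (insert e M)" unfolding adj_def using uv by simp
    then have n2: "(u,v) \<in> Rel V (insert e M)" unfolding Rel_def using uv by blast
    have lt: "c' < c" unfolding c_def c'_def
      by (rule coarsen(2)[OF finV equiv_Rel equiv_Rel Rel_mono uv(2) uv(3) n2 n1]) blast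
    have ce: "card e = 2" using uv by simp
    have "card (Bal (insert e M)) \<le> card (Bal M) * card e"
      by (rule Bal_step_gen[OF insert.hyps(1) _ fin]) (simp add: uv)
    also have "\<dots> \<le> 2 ^ (card V - c) * 2" using IH ce unfolding c_def by simp
    also have "\<dots> = 2 ^ Suc (card V - c)" by simp
    also have "\<dots> \<le> 2 ^ (card V - c')" using lt cn by (intro power_increasing) auto
    finally show ?thesis unfolding c'_def .
  qed
qed





lemma BalI: "d \<in> PiE M (\<lambda>ed. ed) \<Longrightarrow> \<forall>ed\<in>M. sat h d ed \<Longrightarrow> d \<in> Bal M"
  unfolding Bal_def by blast

lemma sat_cong: "d ed = d' ed \<Longrightarrow> sat h d ed = sat h d' ed"
  unfolding sat_def by simp

lemma pow_sum: "finite E \<Longrightarrow> (\<Sum>M\<in>Pow E. (x::real) ^ card (E - M)) = (1 + x) ^ card E"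
  using prod_add[of E "\<lambda>_. 1" "\<lambda>_. x"] by simp

lemma good_orientation:
  assumes finV: "finite V" and Eok: "\<forall>ed\<in>E. \<exists>u v. u \<noteq> v \<and> u \<in> V \<and> v \<in> V \<and> ed = {u,v}"
    and finE: "finite E"
    and x0: "0 < (x::real)" and x1: "x \<le> 1" and eta: "0 < (\<eta>::real)"
    and num: "2 ^ card V * ((2/x) powr (\<eta> * card E)) * (1+x) ^ card E < (2::real) ^ card E"
  shows "\<exists>d \<in> PiE E (\<lambda>ed. ed). \<forall>h. real (card {ed\<in>E. sat h d ed}) \<le> (1 - \<eta>) * card E"
proof (rule ccontr)
  assume "\<not> ?thesis"
  then have bad: "\<And>d. d \<in> PiE E (\<lambda>ed. ed) \<Longrightarrow> \<exists>h. (1 - \<eta>) * card E < real (card {ed\<in>E. sat h d ed})"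
    by (meson not_le)
  define m where "m = card E"
  define n where "n = card V"
  define Ors where "Ors = PiE E (\<lambda>ed. ed)"
  define F where "F = {M. M \<subseteq> E \<and> (1 - \<eta>) * m < card M}"
  define X where "X M = {d \<in> Ors. restrict d M \<in> Bal M}" for M
  have two: "card ed = 2" if edE: "ed \<in> E" for ed
  proof -
    obtain u v where "u \<noteq> v" "ed = {u,v}" using Eok edE by meson
    then show ?thesis by simp
  qed
  have p2: "(\<Prod>ed\<in>E. card ed) = (\<Prod>ed\<in>E. (2::nat))" by (rule prod.cong) (simp_all add: two)
  have cardO: "card Ors = 2 ^ m" unfolding Ors_def m_def
    using card_PiE[OF finE, of "\<lambda>ed. ed"] p2 by simp
  have finF: "finite F" unfolding F_def
    by (rule finite_subset[of _ "Pow E"]) (use finE in auto)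
  have cover: "Ors \<subseteq> (\<Union>M\<in>F. X M)"
  proof
    fix d assume d: "d \<in> Ors"
    then obtain h where h: "(1 - \<eta>) * card E < real (card {ed\<in>E. sat h d ed})"
      using bad unfolding Ors_def by blast
    define M where "M = {ed\<in>E. sat h d ed}"
    have "M \<subseteq> E" unfolding M_def by blast
    then have MF: "M \<in> F" unfolding F_def using h unfolding M_def m_def by simp
    have "restrict d M \<in> PiE M (\<lambda>ed. ed)" using d \<open>M \<subseteq> E\<close> unfolding Ors_def by (auto simp: PiE_def)
    moreover have "\<forall>ed\<in>M. sat h (restrict d M) ed"
    proof
      fix ed assume ed: "ed \<in> M"
      then have "sat h d ed" unfolding M_def by blast
      moreover have "restrict d M ed = d ed" using ed by simp
      ultimately show "sat h (restrict d M) ed" using sat_cong by metis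
    qed
    ultimately have "restrict d M \<in> Bal M" by (rule BalI)
    then have "d \<in> X M" unfolding X_def using d by blast
    then show "d \<in> (\<Union>M\<in>F. X M)" using MF by blast
  qed
  have finO: "finite Ors" unfolding Ors_def using finE two
    by (intro finite_PiE) (auto intro: card_ge_0_finite)
  have cardX: "card (X M) \<le> 2 ^ n * 2 ^ card (E - M)" if M: "M \<in> F" for M
  proof -
    have ME: "M \<subseteq> E" using M unfolding F_def by blast
    have finM: "finite M" using ME finE finite_subset by blast
    have fined: "\<forall>ed\<in>M. finite ed" using two ME by (metis card.infinite subsetD zero_neq_numeral)
    define \<rho> where "\<rho> d = (restrict d M, restrict d (E - M))" for d :: "'a set \<Rightarrow> 'a"
    have inj: "inj_on \<rho> (X M)"
    proof (rule inj_onI)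
      fix d1 d2 assume d1: "d1 \<in> X M" and d2: "d2 \<in> X M" and eq: "\<rho> d1 = \<rho> d2"
      show "d1 = d2"
      proof (rule PiE_ext)
        show "d1 \<in> PiE E (\<lambda>ed. ed)" "d2 \<in> PiE E (\<lambda>ed. ed)" using d1 d2 unfolding X_def Ors_def by auto
        fix i assume i: "i \<in> E"
        show "d1 i = d2 i"
        proof (cases "i \<in> M")
          case True
          then show ?thesis using eq unfolding \<rho>_def by (metis prod.inject restrict_apply')
        next
          case False
          then have "i \<in> E - M" using i by blast
          then show ?thesis using eq unfolding \<rho>_def by (metis prod.inject restrict_apply')
        qed
      qed
    qed
    have sub: "\<rho> ` X M \<subseteq> Bal M \<times> PiE (E - M) (\<lambda>ed. ed)"
    proof
      fix z assume "z \<in> \<rho> ` X M"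
      then obtain d where d: "d \<in> X M" and z: "z = \<rho> d" by blast
      have "restrict d M \<in> Bal M" using d unfolding X_def by blast
      moreover have "restrict d (E - M) \<in> PiE (E - M) (\<lambda>ed. ed)" using d unfolding X_def Ors_def
        by (auto simp: PiE_def)
      ultimately show "z \<in> Bal M \<times> PiE (E - M) (\<lambda>ed. ed)" unfolding z \<rho>_def by blast
    qed
    have finEM: "finite (PiE (E - M) (\<lambda>ed. ed))" using finE two
      by (intro finite_PiE) (auto intro: card_ge_0_finite)
    have "card (X M) \<le> card (Bal M \<times> PiE (E - M) (\<lambda>ed. ed))"
      by (rule card_inj_on_le[OF inj sub]) (use finite_Bal[OF finM fined] finEM in simp)
    also have "\<dots> = card (Bal M) * card (PiE (E - M) (\<lambda>ed. ed))" by (rule card_cartesian_product)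
    also have "card (PiE (E - M) (\<lambda>ed. ed)) = 2 ^ card (E - M)"
    proof -
      have "(\<Prod>ed\<in>E - M. card ed) = (\<Prod>ed\<in>E - M. (2::nat))" by (rule prod.cong) (simp_all add: two)
      then show ?thesis using card_PiE[of "E - M" "\<lambda>ed. ed"] finE by simp
    qed
    also have "card (Bal M) \<le> 2 ^ n" unfolding n_def
      using bal_bound[OF finV Eok finM ME] by (meson diff_le_self le_trans one_le_numeral power_increasing)
    finally show ?thesis by simp
  qed
  have "(2::real) ^ m = real (card Ors)" using cardO by simp
  also have "\<dots> \<le> real (card (\<Union>M\<in>F. X M))"
    using card_mono[OF _ cover] finF finO X_def by (simp add: X_def)
  also have "\<dots> \<le> real (\<Sum>M\<in>F. card (X M))" using card_UN_le[OF finF, of X] by linarith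
  also have "\<dots> \<le> (\<Sum>M\<in>F. 2 ^ n * 2 ^ card (E - M))"
    unfolding of_nat_sum using cardX
    by (intro sum_mono) (metis (mono_tags, lifting) of_nat_le_iff of_nat_mult of_nat_numeral of_nat_power)
  also have "\<dots> \<le> (\<Sum>M\<in>F. 2 ^ n * ((2/x) powr (\<eta> * m) * x ^ card (E - M)))"
  proof (intro sum_mono mult_left_mono)
    fix M assume M: "M \<in> F"
    have ME: "M \<subseteq> E" using M unfolding F_def by blast
    have "card (E - M) = m - card M" unfolding m_def using ME finE by (simp add: card_Diff_subset finite_subset)
    then have cle: "real (card (E - M)) \<le> \<eta> * m"
      using M card_mono[OF finE ME] unfolding F_def m_def by (auto simp: of_nat_diff algebra_simps)
    have "(2::real) ^ card (E - M) = (2/x) ^ card (E - M) * x ^ card (E - M)"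
      using x0 by (simp add: power_divide)
    also have "(2/x) ^ card (E - M) = (2/x) powr (real (card (E - M)))"
      using x0 by (simp add: powr_realpow)
    also have "\<dots> \<le> (2/x) powr (\<eta> * m)"
      using x0 x1 cle by (intro powr_mono) (auto simp: field_simps)
    finally show "(2::real) ^ card (E - M) \<le> (2/x) powr (\<eta> * m) * x ^ card (E - M)"
      using x0 by (simp add: mult_right_mono)
  qed simp
  also have "\<dots> = 2 ^ n * (2/x) powr (\<eta> * m) * (\<Sum>M\<in>F. x ^ card (E - M))"
    by (simp add: sum_distrib_left mult.assoc)
  also have "\<dots> \<le> 2 ^ n * (2/x) powr (\<eta> * m) * (\<Sum>M\<in>Pow E. x ^ card (E - M))"
    using x0 finE by (intro mult_left_mono sum_mono2) (auto simp: F_def)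
  also have "\<dots> = 2 ^ n * (2/x) powr (\<eta> * m) * (1 + x) ^ m"
    using pow_sum[OF finE] unfolding m_def by simp
  finally show False using num unfolding m_def n_def by simp
qed





lemma numeric:
  fixes \<delta> :: real and n m :: nat
  assumes d: "0 < \<delta>" and n: "0 < n" and dm: "(2 + \<delta>) * n \<le> 2 * real m"
    and th: "\<theta> = \<delta> / (2 + \<delta>)" and xd: "x = min 1 (\<theta> * ln 2 / 3)"
    and ed: "\<eta> = \<theta> * ln 2 / (3 * ln (2 / x))"
  shows "2 ^ n * ((2/x) powr (\<eta> * m)) * (1+x) ^ m < (2::real) ^ m"
proof -
  have th0: "0 < \<theta>" "\<theta> < 1" using d th by (simp_all add: divide_less_eq_1)
  have l2: "0 < ln (2::real)" by simp
  have x0: "0 < x" using xd th0 l2 by simp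
  have x1: "x \<le> 1" using xd by simp
  have lx: "ln 2 \<le> ln (2 / x)" using x0 x1 by (simp add: field_simps)
  have lx0: "0 < ln (2 / x)" using lx l2 by linarith
  have m0: "0 < real m" using dm n d
    by (smt (verit) mult_pos_pos of_nat_0_less_iff)
  have nle: "real n \<le> (1 - \<theta>) * m"
  proof -
    have "1 - \<theta> = 2 / (2 + \<delta>)" using th d by (simp add: field_simps)
    have "real n = ((2 + \<delta>) * n) / (2 + \<delta>)" using d by simp
    also have "\<dots> \<le> (2 * real m) / (2 + \<delta>)" using dm d by (intro divide_right_mono) auto
    also have "\<dots> = (1 - \<theta>) * m" using \<open>1 - \<theta> = 2 / (2 + \<delta>)\<close> by simp
    finally show ?thesis .
  qed
  have "ln (2 ^ n * ((2/x) powr (\<eta> * m)) * (1+x) ^ m)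
        = n * ln 2 + \<eta> * m * ln (2/x) + m * ln (1 + x)"
    using x0 by (simp add: ln_mult ln_realpow ln_powr)
  also have "\<eta> * m * ln (2/x) = m * (\<theta> * ln 2 / 3)" using ed lx0 by (simp add: field_simps)
  also have "m * ln (1 + x) \<le> m * (\<theta> * ln 2 / 3)"
  proof -
    have "ln (1 + x) \<le> x" using x0 by (intro ln_add_one_self_le_self) simp
    also have "x \<le> \<theta> * ln 2 / 3" using xd by simp
    finally show ?thesis using m0 by (intro mult_left_mono) auto
  qed
  then have "n * ln 2 + m * (\<theta> * ln 2 / 3) + m * ln (1 + x) \<le> (1 - \<theta>) * m * ln 2 + m * (\<theta> * ln 2 / 3) + m * (\<theta> * ln 2 / 3)"
    using nle l2 by (smt (verit) mult_right_mono)
  also have "\<dots> < m * ln 2" using m0 th0 l2 by (simp add: algebra_simps)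
  also have "\<dots> = ln ((2::real) ^ m)" by (simp add: ln_realpow)
  finally have "ln (2 ^ n * ((2/x) powr (\<eta> * m)) * (1+x) ^ m) < ln ((2::real) ^ m)" .
  then show ?thesis using x0 by (subst (asm) ln_less_cancel_iff) auto
qed



lemma valu_nonneg:
  assumes "\<forall>x y. snd S x y \<ge> 0" "\<forall>x y. snd T x y \<ge> 0"
  shows "0 \<le> valu S T h"
  unfolding valu_def using assms by (intro sum_nonneg mult_nonneg_nonneg) auto

lemma sum_01:
  assumes "finite A" "\<forall>p\<in>A. w p = 0 \<or> w p = (1::real)"
  shows "(\<Sum>p\<in>A. w p) = real (card {p\<in>A. w p = 1})"
proof -
  have "(\<Sum>p\<in>A. w p) = (\<Sum>p\<in>A. if w p = 1 then 1 else 0)"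
    using assms(2) by (intro sum.cong) auto
  also have "\<dots> = (\<Sum>p\<in>{p\<in>A. w p = 1}. 1)" using sum.inter_filter[OF assms(1), of "\<lambda>_. 1::real"] by simp
  finally show ?thesis by simp
qed

lemma double_sum_01:
  assumes "finite V" "\<forall>x y. w x y = 0 \<or> w x y = (1::real)"
  shows "(\<Sum>x\<in>V. \<Sum>y\<in>V. w x y) = real (card {p\<in>V \<times> V. w (fst p) (snd p) = 1})"
proof -
  have "(\<Sum>x\<in>V. \<Sum>y\<in>V. w x y) = (\<Sum>p\<in>V \<times> V. w (fst p) (snd p))"
    by (simp add: sum.cartesian_product case_prod_beta)
  also have "\<dots> = real (card {p\<in>V \<times> V. w (fst p) (snd p) = 1})"
    using assms by (intro sum_01) auto
  finally show ?thesis .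
qed


theorem lemma48:
  fixes \<delta> :: real and \<G> :: "'v graph set"
  assumes "\<delta> > 0"
    and "\<forall>G\<in>\<G>. simple_graph G"
    and "\<forall>G\<in>\<G>. avg_degree G \<ge> 2 + \<delta>"
    and "\<forall>g::nat. \<exists>G\<in>\<G>. girth_ge G g"
  shows "\<not> size_pliable (orientations \<G>)"
proof
  assume pl: "size_pliable (orientations \<G>)"
  define \<theta> where "\<theta> = \<delta> / (2 + \<delta>)"
  define x where "x = min 1 (\<theta> * ln 2 / 3)"
  define \<eta> where "\<eta> = \<theta> * ln 2 / (3 * ln (2 / x))"
  have th0: "0 < \<theta>" "\<theta> < 1" using assms(1) \<theta>_def by (simp_all add: divide_less_eq_1)
  have x0: "0 < x" using x_def th0 by simp
  have x1: "x \<le> 1" using x_def by simp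
  have lx: "ln 2 \<le> ln (2 / x)" using x0 x1 by (simp add: field_simps)
  have l2: "0 < ln (2::real)" by simp
  have lx0: "0 < ln (2 / x)" using lx l2 by linarith
  have eta0: "0 < \<eta>" unfolding \<eta>_def using th0 lx0 l2
    by (intro divide_pos_pos mult_pos_pos) auto
  have eta1: "\<eta> < 1"
  proof -
    have "\<eta> \<le> \<theta> * ln 2 / (3 * ln 2)" unfolding \<eta>_def using th0 lx l2 lx0
      by (intro divide_left_mono) auto
    also have "\<dots> = \<theta> / 3" by simp
    finally show ?thesis using th0 by simp
  qed
  define \<epsilon> where "\<epsilon> = - ln (1 - \<eta>) / 3"
  have eps0: "0 < \<epsilon>" unfolding \<epsilon>_def using eta0 eta1 by simp
  obtain k where hk: "\<forall>A\<in>orientations \<G>. \<exists>B :: nat struc. is_struc B \<and> card (fst B) \<le> k \<and> d_opt A B \<le> ereal \<epsilon>"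
    using pl eps0 unfolding size_pliable_def by blast
  obtain G where GG: "G \<in> \<G>" and gir: "girth_ge G (k + 1)" using assms(4) by blast
  define V where "V = fst G"
  define E where "E = snd G"
  have sg: "simple_graph G" using assms(2) GG by blast
  have finV: "finite V" using sg unfolding simple_graph_def V_def by blast
  have Eok: "\<forall>ed\<in>E. \<exists>u v. u \<noteq> v \<and> u \<in> V \<and> v \<in> V \<and> ed = {u,v}"
    using sg unfolding simple_graph_def V_def E_def by (rule conjunct2)
  have finE: "finite E"
  proof -
    have "E \<subseteq> Pow V"
    proof
      fix ed assume "ed \<in> E"
      then obtain u v where "u \<in> V" "v \<in> V" "ed = {u,v}" using Eok by meson
      then show "ed \<in> Pow V" by simp
    qed
    then show ?thesis using finV finite_subset by blast
  qed
  have avg: "2 + \<delta> \<le> 2 * real (card E) / real (card V)"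
    using assms(3) GG unfolding avg_degree_def E_def V_def by blast
  have n0: "0 < card V"
  proof (rule ccontr)
    assume "\<not> 0 < card V"
    then have "card V = 0" by simp
    then show False using avg assms(1) by simp
  qed
  have dm: "(2 + \<delta>) * card V \<le> 2 * real (card E)"
    using avg n0 by (simp add: field_simps)
  have num: "2 ^ card V * ((2/x) powr (\<eta> * card E)) * (1+x) ^ card E < (2::real) ^ card E"
    by (rule numeric[OF assms(1) n0 dm \<theta>_def x_def \<eta>_def])
  obtain d where dP: "d \<in> PiE E (\<lambda>ed. ed)"
    and dgood: "\<forall>h. real (card {ed\<in>E. sat h d ed}) \<le> (1 - \<eta>) * card E"
    using good_orientation[OF finV Eok finE x0 x1 eta0 num] by blast
  define e where "e u v = (if {u,v} \<in> E \<and> d {u,v} = v then 1 else (0::real))" for u v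
  have e01: "e u v = 0 \<or> e u v = 1" for u v unfolding e_def by simp
  have ori: "is_orientation G e"
    unfolding is_orientation_def
  proof (intro conjI allI impI)
    fix u v
    show "e u v \<in> {0, 1}" using e01[of u v] by blast
  next
    fix u v assume "e u v = 1"
    then show "{u, v} \<in> snd G" unfolding e_def E_def by (simp split: if_splits)
  next
    fix u v assume uvE: "{u, v} \<in> snd G"
    have uv: "u \<noteq> v" by (rule simple_edge_neq[OF sg uvE])
    have dm: "d {u,v} \<in> {u,v}" using PiE_mem[OF dP] uvE unfolding E_def by blast
    have vu: "{v,u} = {u,v}" by (rule insert_commute)
    show "(e u v = 1) = (e v u = 0)"
      unfolding e_def using uvE uv dm vu unfolding E_def by auto
  qed
  have AO: "(V, e) \<in> orientations \<G>" unfolding orientations_def V_def using GG ori by blast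
  obtain B :: "nat struc" where Bs: "is_struc B" and Bk: "card (fst B) \<le> k"
    and dB: "d_opt (V, e) B \<le> ereal \<epsilon>"
    using hk AO by blast
  obtain f :: "'v \<Rightarrow> nat" and N0 where fV: "f ` V = {i. i < N0}" and finj: "inj_on f V"
    using finite_imp_inj_to_nat_seg[OF finV] by blast
  define g where "g = inv_into V f"
  have gf: "g (f v) = v" if "v \<in> V" for v unfolding g_def using finj that by (rule inv_into_f_f)
  have gV: "g i \<in> V" if "i \<in> f ` V" for i unfolding g_def using that by (rule inv_into_into)
  define C1 :: "nat struc" where "C1 = (f ` V, \<lambda>i j. e (g i) (g j))"
  define N where "N = 2 * k + 1"
  define w2 where "w2 i j = (if j = Suc i \<and> j < N then 1 else (0::real))" for i j :: nat
  define C2 :: "nat struc" where "C2 = ({0..<N}, w2)"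
  have Vne: "V \<noteq> {}" using n0 by auto
  have e_rat: "e u v \<in> \<rat>" for u v using e01[of u v] by auto
  have e_nn: "\<forall>x y. e x y \<ge> 0"
  proof (intro allI)
    fix x y show "e x y \<ge> 0" using e01[of x y] by auto
  qed
  have C1s: "is_struc C1" unfolding is_struc_def C1_def using finV Vne e_rat e_nn by auto
  have C2s: "is_struc C2" unfolding is_struc_def C2_def w2_def N_def by auto
  have Bfin: "finite (fst B)" and Bnn: "\<forall>x y. snd B x y \<ge> 0" using Bs unfolding is_struc_def by auto
  define \<alpha>1 where "\<alpha>1 = opt (V, e) C1"
  define arcs where "arcs = {p\<in>V \<times> V. e (fst p) (snd p) = 1}"
  have "valu (V, e) C1 f \<le> \<alpha>1" unfolding \<alpha>1_def
    by (rule opt_ge) (auto simp: C1_def finV)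
  moreover have "valu (V, e) C1 f = real (card arcs)"
  proof -
    have ee: "e x y * e x y = e x y" for x y using e01[of x y] by auto
    have "valu (V, e) C1 f = (\<Sum>x\<in>V. \<Sum>y\<in>V. e x y * e (g (f x)) (g (f y)))"
      unfolding valu_def C1_def by simp
    also have "\<dots> = (\<Sum>x\<in>V. \<Sum>y\<in>V. e x y)"
      by (intro sum.cong refl) (simp add: gf ee)
    also have "\<dots> = real (card arcs)" unfolding arcs_def by (rule double_sum_01[OF finV]) (use e01 in blast)
    finally show ?thesis .
  qed
  moreover have "card E \<le> card arcs"
  proof -
    have "E \<subseteq> (\<lambda>p. {fst p, snd p}) ` arcs"
    proof
      fix ed assume edE: "ed \<in> E"
      then obtain u v where uv: "u \<noteq> v" "u \<in> V" "v \<in> V" "ed = {u,v}" using Eok by meson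
      have "d ed \<in> ed" using PiE_mem[OF dP edE] .
      then have "d {u,v} = v \<or> d {v,u} = u" using uv by (auto simp: insert_commute)
      then show "ed \<in> (\<lambda>p. {fst p, snd p}) ` arcs"
      proof
        assume "d {u,v} = v"
        then have "(u,v) \<in> arcs" unfolding arcs_def e_def using uv edE by simp
        then show ?thesis using uv by force
      next
        assume "d {v,u} = u"
        then have "(v,u) \<in> arcs" unfolding arcs_def e_def using uv edE by (simp add: insert_commute)
        then show ?thesis using uv by (force simp: insert_commute)
      qed
    qed
    moreover have "finite arcs" unfolding arcs_def using finV by simp
    ultimately show ?thesis by (meson card_image_le card_mono finite_imageI le_trans)
  qed
  ultimately have a1: "real (card E) \<le> \<alpha>1" by linarith
  define \<alpha>2 where "\<alpha>2 = opt (V, e) C2"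
  obtain h where hV: "h ` V \<subseteq> {0..<N}" and a2h: "\<alpha>2 = valu (V, e) C2 h"
    using opt_obtain[of "(V, e)" C2] finV unfolding \<alpha>2_def C2_def N_def by auto
  have a2: "\<alpha>2 \<le> (1 - \<eta>) * card E"
  proof -
    define Sat where "Sat = {p\<in>V \<times> V. e (fst p) (snd p) * w2 (h (fst p)) (h (snd p)) = 1}"
    have w01: "w2 i j = 0 \<or> w2 i j = 1" for i j unfolding w2_def by simp
    have p01: "e a b * w2 i j = 0 \<or> e a b * w2 i j = 1" for a b i j
      using e01[of a b] w01[of i j] by auto
    have "\<alpha>2 = real (card Sat)" unfolding a2h valu_def C2_def Sat_def
      by (simp, rule double_sum_01[OF finV]) (use p01 in blast)
    also have "card Sat \<le> card {ed\<in>E. sat (\<lambda>v. int (h v)) d ed}"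
    proof (rule card_inj_on_le)
      show "finite {ed\<in>E. sat (\<lambda>v. int (h v)) d ed}" using finE by simp
      have SatD: "{a,b} \<in> E \<and> d {a,b} = b \<and> h b = Suc (h a) \<and> a \<noteq> b" if "(a,b) \<in> Sat" for a b
      proof -
        have "e a b * w2 (h a) (h b) = 1" using that unfolding Sat_def by simp
        then have "e a b = 1" "w2 (h a) (h b) = 1" using e01[of a b] w01[of "h a" "h b"] by auto
        then show ?thesis unfolding e_def w2_def using simple_edge_neq[OF sg, of a b] E_def
          by (auto split: if_splits)
      qed
      show "inj_on (\<lambda>p. {fst p, snd p}) Sat"
      proof (rule inj_onI)
        fix p p' assume p: "p \<in> Sat" and p': "p' \<in> Sat" and eq: "{fst p, snd p} = {fst p', snd p'}"
        obtain a b where ab: "p = (a,b)" by force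
        obtain a' b' where ab': "p' = (a',b')" by force
        have A: "d {a,b} = b" "a \<noteq> b" using SatD[of a b] p ab by auto
        have B: "d {a',b'} = b'" "a' \<noteq> b'" using SatD[of a' b'] p' ab' by auto
        have eq': "{a,b} = {a',b'}" using eq ab ab' by simp
        then have "b = b'" using A B by simp
        then have "a = a'" using eq' A B by (metis doubleton_eq_iff)
        then show "p = p'" using ab ab' \<open>b = b'\<close> by simp
      qed
      show "(\<lambda>p. {fst p, snd p}) ` Sat \<subseteq> {ed\<in>E. sat (\<lambda>v. int (h v)) d ed}"
      proof
        fix z assume "z \<in> (\<lambda>p. {fst p, snd p}) ` Sat"
        then obtain a b where ab: "(a,b) \<in> Sat" and z: "z = {a,b}" by force
        have S: "{a,b} \<in> E" "d {a,b} = b" "h b = Suc (h a)" "a \<noteq> b" using SatD[OF ab] by auto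
        have "sat (\<lambda>v. int (h v)) d {a,b}" unfolding sat_def using S by auto
        then show "z \<in> {ed\<in>E. sat (\<lambda>v. int (h v)) d ed}" using S z by simp
      qed
    qed
    then have "real (card Sat) \<le> real (card {ed\<in>E. sat (\<lambda>v. int (h v)) d ed})" by simp
    also have "\<dots> \<le> (1 - \<eta>) * card E" using dgood by blast
    finally show ?thesis .
  qed
  define \<beta>1 where "\<beta>1 = opt B C1"
  define \<beta>2 where "\<beta>2 = opt B C2"
  obtain hB where hB: "hB ` fst B \<subseteq> f ` V" and b1h: "\<beta>1 = valu B C1 hB"
    using opt_obtain[of B C1] Bfin finV Vne unfolding \<beta>1_def C1_def by auto
  have b12: "\<beta>1 \<le> \<beta>2"
  proof -
    define S where "S = g ` hB ` fst B"
    have SV: "S \<subseteq> V" unfolding S_def using hB gV by blast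
    have finS: "finite S" unfolding S_def using Bfin by simp
    have cS: "card S \<le> k" unfolding S_def using Bk Bfin
      by (meson card_image_le finite_imageI le_trans)
    have noc: "\<forall>cs. is_cycle G cs \<longrightarrow> \<not> set cs \<subseteq> S"
    proof (intro allI impI notI)
      fix cs assume cy: "is_cycle G cs" and sub: "set cs \<subseteq> S"
      have "length cs = card (set cs)" using cy unfolding is_cycle_def by (simp add: distinct_card)
      also have "\<dots> \<le> card S" using card_mono[OF finS sub] .
      finally have "length cs \<le> k" using cS by simp
      moreover have "length cs \<ge> k + 1" using gir cy unfolding girth_ge_def by blast
      ultimately show False by simp
    qed
    obtain q where qb: "\<forall>x\<in>S. \<bar>q x\<bar> \<le> int (card S)"
      and qe: "\<forall>x\<in>S. \<forall>y\<in>S. e x y = 1 \<longrightarrow> q y = q x + 1"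
      using potential_exists[OF sg ori finS noc] by blast
    define hB' where "hB' b = nat (q (g (hB b)) + int k)" for b
    have inS: "g (hB b) \<in> S" if "b \<in> fst B" for b unfolding S_def using that by blast
    have qk: "\<bar>q (g (hB b))\<bar> \<le> int k" if "b \<in> fst B" for b
      using qb inS[OF that] cS by force
    have hB'N: "hB' b < N" if "b \<in> fst B" for b
      using qk[OF that] unfolding hB'_def N_def by linarith
    have pw: "e (g (hB b1)) (g (hB b2)) \<le> w2 (hB' b1) (hB' b2)" if "b1 \<in> fst B" "b2 \<in> fst B" for b1 b2
    proof (cases "e (g (hB b1)) (g (hB b2)) = 1")
      case True
      then have "q (g (hB b2)) = q (g (hB b1)) + 1" using qe inS that by blast
      then have "hB' b2 = Suc (hB' b1)" unfolding hB'_def using qk[OF that(1)] by simp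
      then show ?thesis unfolding w2_def using True hB'N[OF that(2)] by simp
    next
      case False
      then have "e (g (hB b1)) (g (hB b2)) = 0" using e01 by blast
      then show ?thesis unfolding w2_def by simp
    qed
    have "valu B C1 hB \<le> valu B C2 hB'"
      unfolding valu_def C1_def C2_def using pw Bnn
      by (auto intro!: sum_mono mult_left_mono)
    also have "\<dots> \<le> \<beta>2" unfolding \<beta>2_def
      by (rule opt_ge) (use Bfin hB'N in \<open>auto simp: C2_def\<close>)
    finally show ?thesis using b1h by simp
  qed
  have L1: "ln_dist \<alpha>1 \<beta>1 \<le> ereal \<epsilon>" unfolding \<alpha>1_def \<beta>1_def by (rule d_opt_le[OF dB C1s])
  have L2: "ln_dist \<alpha>2 \<beta>2 \<le> ereal \<epsilon>" unfolding \<alpha>2_def \<beta>2_def by (rule d_opt_le[OF dB C2s])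
  have m0: "0 < real (card E)" using dm n0 assms(1)
    by (smt (verit) mult_pos_pos of_nat_0_less_iff)
  have a1p: "0 < \<alpha>1" using a1 m0 by linarith
  have b1nn: "0 \<le> \<beta>1" unfolding b1h C1_def using Bnn e_nn by (intro valu_nonneg) auto
  have a2nn: "0 \<le> \<alpha>2" unfolding a2h C2_def using e_nn by (intro valu_nonneg) (auto simp: w2_def)
  have b1p: "0 < \<beta>1"
  proof (rule ccontr)
    assume "\<not> 0 < \<beta>1"
    then have "\<beta>1 = 0" using b1nn by simp
    then have "ln_dist \<alpha>1 \<beta>1 = \<infinity>" unfolding ln_dist_def using a1p by simp
    then show False using L1 by simp
  qed
  have b2p: "0 < \<beta>2" using b1p b12 by simp
  have a2p: "0 < \<alpha>2"
  proof (rule ccontr)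
    assume "\<not> 0 < \<alpha>2"
    then have "\<alpha>2 = 0" using a2nn by simp
    then have "ln_dist \<alpha>2 \<beta>2 = \<infinity>" unfolding ln_dist_def using b2p by simp
    then show False using L2 by simp
  qed
  have "ereal \<bar>ln \<alpha>1 - ln \<beta>1\<bar> \<le> ereal \<epsilon>" using L1 a1p b1p unfolding ln_dist_def by simp
  then have i1: "ln \<alpha>1 - ln \<beta>1 \<le> \<epsilon>" by simp
  have "ereal \<bar>ln \<alpha>2 - ln \<beta>2\<bar> \<le> ereal \<epsilon>" using L2 a2p b2p unfolding ln_dist_def by simp
  then have i2: "ln \<beta>2 - ln \<alpha>2 \<le> \<epsilon>" by simp
  have i3: "ln \<beta>1 \<le> ln \<beta>2" using b12 b1p by simp
  have "\<alpha>2 \<le> (1 - \<eta>) * \<alpha>1" using a2 a1 eta1 by (smt (verit) mult_left_mono)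
  then have "ln \<alpha>2 \<le> ln ((1 - \<eta>) * \<alpha>1)" using a2p by simp
  also have "\<dots> = ln (1 - \<eta>) + ln \<alpha>1" using eta1 a1p by (simp add: ln_mult)
  finally have "ln \<alpha>1 - ln \<alpha>2 \<ge> 3 * \<epsilon>" unfolding \<epsilon>_def by simp
  then show False using i1 i2 i3 eps0 by linarith
qed


end
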